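(* Let $K(t,x,z)=\sum_{S} t^{\mathrm{da}(S)}x^{m(S)}z^{|S|}$, where the sum runs over all compositions $S$ (of all nonnegative integers $n$, including the empty composition of $0$), $m(S)$ is the number of parts of $S$ and $|S|$ is the sum of its parts. Then, as formal power series, $$K(t,x,z)=\frac{(1-z+xz)(1-z^2)}{(1-z)(1-(1+x^2)z^2)-2tx^2z^3}.$$
   Context: A composition of $n$ with $m$ parts is a sequence $(a_1,\dots,a_m)$ of positive integers with $m\ge 0$ and $a_1+\dots+a_m=n$. For a finite sequence $S=(a_1,\dots,a_m)$, the degree of asymmetry is $\mathrm{da}(S)=|\{i: 1\le i\le m/2,\ a_i\neq a_{m+1-i}\}|$. *)

theory Defs
  imports "HOL-Computational_Algebra.Polynomial" "HOL-Computational_Algebra.Formal_Power_Series"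
begin

definition compositions :: "nat \<Rightarrow> nat list set" where
  "compositions n = {S. (\<forall>a\<in>set S. 0 < a) \<and> sum_list S = n}"

(* degree of asymmetry, 1-indexed: a_i = S ! (i-1), a_{m+1-i} = S ! (m-i) *)
definition da :: "nat list \<Rightarrow> nat" where
  "da S = card {i. 1 \<le> i \<and> 2 * i \<le> length S \<and> S ! (i - 1) \<noteq> S ! (length S - i)}"

(* Formal power series in z whose coefficients are polynomials in x (outer poly)
   with coefficients polynomials in t (inner poly), over the integers. *)
type_synonym tx_poly = "int poly poly"

definition var_t :: tx_poly where "var_t = [:[:0, 1:]:]"
definition var_x :: tx_poly where "var_x = [:0, 1:]"

definition K :: "tx_poly fps" where
  "K = Abs_fps (\<lambda>n. \<Sum>S\<in>compositions n. var_t ^ da S * var_x ^ length S)"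

end

theory Submission
  imports Defs
begin

lemma len_le_sum: "\<forall>a\<in>set S. 0 < (a::nat) \<Longrightarrow> length S \<le> sum_list S"
  by (induction S) auto

lemma finite_comp: "finite (compositions n)"
proof -
  have "compositions n \<subseteq> {xs. set xs \<subseteq> {..n} \<and> length xs \<le> n}"
    using member_le_sum_list len_le_sum by (fastforce simp: compositions_def)
  then show ?thesis using finite_lists_length_le[of "{..n}" n] finite_subset by blast
qed

lemma da_set:
  "{i. 1 \<le> i \<and> 2 * i \<le> length (a # M @ [b]) \<and> (a # M @ [b]) ! (i - 1) \<noteq> (a # M @ [b]) ! (length (a # M @ [b]) - i)}
   = (if a = b then {} else {1}) \<union> Suc ` {i. 1 \<le> i \<and> 2 * i \<le> length M \<and> M ! (i - 1) \<noteq> M ! (length M - i)}"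
  (is "?L = ?R")
proof (intro set_eqI iffI)
  fix i assume "i \<in> ?L"
  then have i: "1 \<le> i" "2 * i \<le> length M + 2" "(a # M @ [b]) ! (i - 1) \<noteq> (a # M @ [b]) ! (length M + 2 - i)"
    by auto
  show "i \<in> ?R"
  proof (cases "i = 1")
    case True
    then show ?thesis using i by (auto simp: nth_append)
  next
    case False
    then obtain k where k: "i = Suc k" "1 \<le> k" using i(1) by (cases i) auto
    have "M ! (k - 1) \<noteq> M ! (length M - k)"
      using i k by (auto simp: nth_append nth_Cons' split: if_splits)
    then show ?thesis using i k by auto
  qed
next
  fix i assume "i \<in> ?R"
  then consider "i = 1" "a \<noteq> b" | k where "i = Suc k" "1 \<le> k" "2 * k \<le> length M" "M ! (k - 1) \<noteq> M ! (length M - k)"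
    by (auto split: if_splits)
  then show "i \<in> ?L"
  proof cases
    case 1
    then show ?thesis by (auto simp: nth_append)
  next
    case 2
    then show ?thesis by (auto simp: nth_append nth_Cons')
  qed
qed

lemma da_snoc_cons: "da (a # M @ [b]) = da M + (if a = b then 0 else 1)"
proof -
  have fin: "finite {i. 1 \<le> i \<and> 2 * i \<le> length M \<and> M ! (i - 1) \<noteq> M ! (length M - i)}"
    by (rule finite_subset[of _ "{..length M}"]) auto
  show ?thesis
    unfolding da_def da_set using fin
    by (subst card_Un_disjoint) (auto simp: card_image)
qed


definition kc :: "nat \<Rightarrow> tx_poly" where
  "kc n = (\<Sum>S\<in>compositions n. var_t ^ da S * var_x ^ length S)"

definition w :: "nat \<Rightarrow> nat \<Rightarrow> tx_poly" where
  "w j i = (if 2 * j = i then 1 else var_t)"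

definition Qs :: "tx_poly fps" where
  "Qs = Abs_fps (\<lambda>i. \<Sum>j\<in>{1..<i}. w j i)"

lemma da_short: "length S < 2 \<Longrightarrow> da S = 0"
proof -
  assume "length S < 2"
  then have e: "{i. 1 \<le> i \<and> 2 * i \<le> length S \<and> S ! (i - 1) \<noteq> S ! (length S - i)} = {}" by auto
  show ?thesis unfolding da_def e by simp
qed

lemma comp_split:
  "compositions n = {S\<in>compositions n. length S < 2} \<union> {S\<in>compositions n. 2 \<le> length S}"
  by auto

lemma comp_small: "{S\<in>compositions n. length S < 2} = (if n = 0 then {[]} else {[n]})"
proof (intro set_eqI iffI)
  fix S assume "S \<in> {S\<in>compositions n. length S < 2}"
  then have "S = [] \<or> (\<exists>a. S = [a])" "S \<in> compositions n"
    by (auto simp: length_Suc_conv numeral_2_eq_2 less_Suc_eq)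
  then show "S \<in> (if n = 0 then {[]} else {[n]})" by (auto simp: compositions_def)
qed (auto simp: compositions_def split: if_splits)

definition hmap :: "nat \<times> nat \<times> nat list \<Rightarrow> nat list" where
  "hmap p = (case p of (i, j, M) \<Rightarrow> j # M @ [i - j])"

lemma hmap_inj: "inj_on hmap (SIGMA i:{..n}. SIGMA j:{1..<i}. compositions (n - i))"
proof (rule inj_onI)
  fix p q assume "p \<in> (SIGMA i:{..n}. SIGMA j:{1..<i}. compositions (n - i))"
    "q \<in> (SIGMA i:{..n}. SIGMA j:{1..<i}. compositions (n - i))" "hmap p = hmap q"
  then show "p = q" by (auto simp: hmap_def)
qed

lemma hmap_image: "hmap ` (SIGMA i:{..n}. SIGMA j:{1..<i}. compositions (n - i)) = {S\<in>compositions n. 2 \<le> length S}"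
proof (intro set_eqI iffI)
  fix S assume "S \<in> hmap ` (SIGMA i:{..n}. SIGMA j:{1..<i}. compositions (n - i))"
  then obtain p where p: "p \<in> (SIGMA i:{..n}. SIGMA j:{1..<i}. compositions (n - i))"
    and Sp: "S = hmap p" by (rule imageE)
  obtain i j M where pe: "p = (i, j, M)" by (cases p) auto
  have T: "(i, j, M) \<in> (SIGMA i:{..n}. SIGMA j:{1..<i}. compositions (n - i))" using p pe by simp
  have Sh: "S = hmap (i, j, M)" using Sp pe by simp
  from T have ijM: "i \<le> n" "1 \<le> j" "j < i" "M \<in> compositions (n - i)" by simp_all
  have Sd: "S = j # M @ [i - j]" using Sh by (simp add: hmap_def)
  have sM: "sum_list M = n - i" and pM: "\<forall>a\<in>set M. 0 < a" using ijM(4) unfolding compositions_def by simp_all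
  have "sum_list S = j + sum_list M + (i - j)" unfolding Sd by simp
  also have "\<dots> = n" using sM ijM(1,3) by linarith
  finally have "sum_list S = n" .
  moreover have "\<forall>a\<in>set S. 0 < a" using pM ijM(2,3) unfolding Sd by simp
  moreover have "2 \<le> length S" unfolding Sd by simp
  ultimately show "S \<in> {S\<in>compositions n. 2 \<le> length S}"
    unfolding compositions_def by blast
next
  fix S assume S: "S \<in> {S\<in>compositions n. 2 \<le> length S}"
  have len: "2 \<le> length S" using S by blast
  have "1 \<le> length (tl S)" using len by simp
  then have ne2: "tl S \<noteq> []" by (cases "tl S") auto
  have ne: "S \<noteq> []" "tl S \<noteq> []" using len ne2 by auto
  have "S = hd S # butlast (tl S) @ [last (tl S)]" using ne
    by (metis append_butlast_last_id list.collapse)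
  then obtain a M b where Sd: "S = a # M @ [b]" by blast
  have pos: "\<forall>x\<in>set S. 0 < x" and sm: "sum_list S = n" using S unfolding compositions_def by blast+
  have "0 < a" "0 < b" "\<forall>x\<in>set M. 0 < x" using pos unfolding Sd by simp_all
  moreover have "a + sum_list M + b = n" using sm unfolding Sd by simp
  ultimately have mem: "(a + b, a, M) \<in> (SIGMA i:{..n}. SIGMA j:{1..<i}. compositions (n - i))"
    unfolding compositions_def by simp
  have eq: "S = hmap (a + b, a, M)" using Sd by (simp add: hmap_def)
  show "S \<in> hmap ` (SIGMA i:{..n}. SIGMA j:{1..<i}. compositions (n - i))"
    by (rule image_eqI[where f = hmap and x = "(a + b, a, M)", OF eq mem])
qed

lemma sigma_sum: "(\<Sum>x\<in>(SIGMA i:{..n}. SIGMA j:{1..<i}. compositions (n - i)). (g::_\<Rightarrow>tx_poly) x) = (\<Sum>i\<le>n. \<Sum>j\<in>{1..<i}. \<Sum>M\<in>compositions (n - i). g (i, j, M))"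
proof -
  have "(\<Sum>i\<le>n. \<Sum>p\<in>(SIGMA j:{1..<i}. compositions (n - i)). g (i, p))
      = (\<Sum>(i, p)\<in>(SIGMA i:{..n}. SIGMA j:{1..<i}. compositions (n - i)). g (i, p))"
    by (rule sum.Sigma) (auto simp: finite_comp)
  moreover have "\<And>i. (\<Sum>j\<in>{1..<i}. \<Sum>M\<in>compositions (n - i). g (i, j, M))
      = (\<Sum>(j, M)\<in>(SIGMA j:{1..<i}. compositions (n - i)). g (i, j, M))"
    by (rule sum.Sigma) (auto simp: finite_comp)
  ultimately show ?thesis by (simp add: case_prod_beta')
qed

lemma f_hmap: "var_t ^ da (hmap (i,j,M)) * var_x ^ length (hmap (i,j,M)) = var_x ^ 2 * (w j i * (var_t ^ da M * var_x ^ length M))"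
  if "j \<in> {1..<i}"
proof -
  have e: "(j = i - j) = (2 * j = i)" using that by auto
  have h: "hmap (i,j,M) = j # M @ [i - j]" by (simp add: hmap_def)
  have d: "var_t ^ da (hmap (i,j,M)) = var_t ^ da M * w j i"
    unfolding h da_snoc_cons e w_def power_add by simp
  have hl: "length (hmap (i,j,M)) = length M + 2" unfolding h by simp
  have l: "var_x ^ length (hmap (i,j,M)) = var_x ^ length M * var_x ^ 2"
    unfolding hl by (rule power_add)
  show ?thesis unfolding d l by (simp only: ac_simps)
qed

lemma kc_rec: "kc n = (if n = 0 then 1 else var_x) + var_x ^ 2 * (\<Sum>i\<le>n. fps_nth Qs i * kc (n - i))"
proof -
  let ?f = "\<lambda>S. var_t ^ da S * var_x ^ length S"
  let ?T = "SIGMA i:{..n}. SIGMA j:{1..<i}. compositions (n - i)"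
  have fin: "finite ?T" using finite_comp by auto
  have "kc n = sum ?f {S\<in>compositions n. length S < 2} + sum ?f {S\<in>compositions n. 2 \<le> length S}"
    unfolding kc_def using finite_comp
    by (subst comp_split) (rule sum.union_disjoint, auto)
  also have "sum ?f {S\<in>compositions n. length S < 2} = (if n = 0 then 1 else var_x)"
    by (simp add: comp_small da_short)
  also have "sum ?f {S\<in>compositions n. 2 \<le> length S} = sum (?f \<circ> hmap) ?T"
    unfolding hmap_image[symmetric] by (rule sum.reindex[OF hmap_inj])
  also have "\<dots> = (\<Sum>i\<le>n. \<Sum>j\<in>{1..<i}. \<Sum>M\<in>compositions (n - i). (?f \<circ> hmap) (i, j, M))"
    by (rule sigma_sum)
  also have "\<dots> = (\<Sum>i\<le>n. \<Sum>j\<in>{1..<i}. \<Sum>M\<in>compositions (n - i). var_x ^ 2 * (w j i * ?f M))"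
  proof (intro sum.cong refl)
    fix i j :: nat and M :: "nat list" assume "j \<in> {1..<i}"
    then show "(?f \<circ> hmap) (i, j, M) = var_x ^ 2 * (w j i * ?f M)"
      using f_hmap by simp
  qed
  also have "\<dots> = var_x ^ 2 * (\<Sum>i\<le>n. fps_nth Qs i * kc (n - i))"
  proof -
    have "\<And>i. (\<Sum>j\<in>{1..<i}. \<Sum>M\<in>compositions (n - i). var_x ^ 2 * (w j i * (var_t ^ da M * var_x ^ length M)))
       = var_x ^ 2 * (fps_nth Qs i * kc (n - i))"
      by (simp add: Qs_def kc_def sum_distrib_left sum_distrib_right, rule sum.swap)
    then show ?thesis by (simp add: sum_distrib_left)
  qed
  finally show ?thesis .
qed


definition Pf :: "tx_poly fps" where "Pf = Abs_fps (\<lambda>n. if n = 0 then 0 else 1)"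
definition Ef :: "tx_poly fps" where "Ef = Abs_fps (\<lambda>n. if even n \<and> n \<noteq> 0 then 1 else 0)"

lemma K_eq: "K = 1 + fps_const var_x * Pf + fps_const (var_x ^ 2) * (Qs * K)"
proof (rule fps_ext)
  fix n
  have "fps_nth K n = kc n" by (simp add: K_def kc_def)
  also have "\<dots> = (if n = 0 then 1 else var_x) + var_x ^ 2 * (\<Sum>i\<le>n. fps_nth Qs i * kc (n - i))"
    by (rule kc_rec)
  also have "(\<Sum>i\<le>n. fps_nth Qs i * kc (n - i)) = fps_nth (Qs * K) n"
    by (simp add: fps_mult_nth atLeast0AtMost K_def kc_def)
  finally show "fps_nth K n = fps_nth (1 + fps_const var_x * Pf + fps_const (var_x ^ 2) * (Qs * K)) n"
    by (simp add: Pf_def)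
qed

lemma PP_nth: "fps_nth (Pf * Pf) i = (\<Sum>j\<in>{1..<i}. 1)"
proof -
  have "fps_nth (Pf * Pf) i = (\<Sum>j=0..i. (if j = 0 then 0 else 1) * (if i - j = 0 then 0 else (1::tx_poly)))"
    by (simp add: fps_mult_nth Pf_def)
  also have "\<dots> = (\<Sum>j\<in>{1..<i}. 1)"
    by (rule sum.mono_neutral_cong_right) auto
  finally show ?thesis .
qed

lemma E_nth: "(\<Sum>j\<in>{1..<i}. (if 2 * j = i then 1 else 0)) = fps_nth Ef i"
proof (cases "even i \<and> i \<noteq> 0")
  case True
  have "(\<Sum>j\<in>{1..<i}. (if 2 * j = i then 1 else (0::tx_poly))) = (\<Sum>j\<in>{1..<i}. (if j = i div 2 then 1 else 0))"
    by (rule sum.cong) (use True in auto)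
  also have "\<dots> = 1" using True by (subst sum.delta) auto
  finally show ?thesis using True by (simp add: Ef_def)
next
  case False
  have "(\<Sum>j\<in>{1..<i}. (if 2 * j = i then 1 else (0::tx_poly))) = (\<Sum>j\<in>{1..<i}. 0)"
    by (rule sum.cong) (use False in auto)
  then show ?thesis using False by (simp add: Ef_def)
qed

lemma Qs_eq: "Qs = fps_const var_t * (Pf * Pf) + fps_const (1 - var_t) * Ef"
proof (rule fps_ext)
  fix i
  have "fps_nth Qs i = (\<Sum>j\<in>{1..<i}. var_t * 1 + (1 - var_t) * (if 2 * j = i then 1 else 0))"
    unfolding Qs_def fps_nth_Abs_fps by (intro sum.cong refl) (simp add: w_def algebra_simps)
  also have "\<dots> = var_t * (\<Sum>j\<in>{1..<i}. 1) + (1 - var_t) * (\<Sum>j\<in>{1..<i}. (if 2 * j = i then 1 else 0))"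
    by (simp add: sum.distrib sum_distrib_left)
  also have "\<dots> = fps_nth (fps_const var_t * (Pf * Pf) + fps_const (1 - var_t) * Ef) i"
    unfolding fps_add_nth fps_mult_left_const_nth PP_nth E_nth ..
  finally show "fps_nth Qs i = fps_nth (fps_const var_t * (Pf * Pf) + fps_const (1 - var_t) * Ef) i" .
qed

lemma P_eq: "Pf * (1 - fps_X) = fps_X"
  by (rule fps_ext) (simp add: algebra_simps Pf_def)

lemma E_eq: "Ef * (1 - fps_X ^ 2) = fps_X ^ 2"
proof (rule fps_ext)
  fix n
  have "fps_nth (Ef * (1 - fps_X ^ 2)) n = fps_nth Ef n - (if n < 2 then 0 else fps_nth Ef (n - 2))"
    by (simp add: right_diff_distrib fps_X_power_mult_right_nth)
  also have "\<dots> = fps_nth (fps_X ^ 2 :: tx_poly fps) n"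
    by (cases "n < 2") (auto simp: Ef_def fps_X_power_nth)
  finally show "fps_nth (Ef * (1 - fps_X ^ 2)) n = fps_nth (fps_X ^ 2 :: tx_poly fps) n" .
qed

theorem proposition2p1:
  shows "K * ((1 - fps_X) * (1 - (1 + fps_const var_x ^ 2) * fps_X ^ 2)
              - 2 * fps_const var_t * fps_const var_x ^ 2 * fps_X ^ 3)
         = (1 - fps_X + fps_const var_x * fps_X) * (1 - fps_X ^ 2)"
proof -
  define z :: "tx_poly fps" where "z = fps_X"
  define X where "X = fps_const var_x"
  define T where "T = fps_const var_t"
  have c1: "fps_const (var_x ^ 2) = X ^ 2" by (simp add: X_def)
  have c2: "fps_const (1 - var_t) = 1 - T"
    unfolding T_def fps_const_sub[symmetric] by simp
  have K1: "K = 1 + X * Pf + X ^ 2 * (Qs * K)" using K_eq unfolding c1 X_def .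
  have Q1: "Qs = T * (Pf * Pf) + (1 - T) * Ef" using Qs_eq unfolding c2 T_def .
  have P1: "Pf * (1 - z) = z" using P_eq unfolding z_def .
  have E1: "Ef * (1 - z ^ 2) = z ^ 2" using E_eq unfolding z_def .
  have Q2: "Qs * ((1 - z) ^ 2 * (1 + z)) = z ^ 2 * (1 - z + 2 * T * z)"
  proof -
    have "Qs * ((1 - z) ^ 2 * (1 + z)) = T * (Pf * (1 - z)) ^ 2 * (1 + z) + (1 - T) * (Ef * (1 - z ^ 2)) * (1 - z)"
      unfolding Q1 by (simp add: algebra_simps power2_eq_square)
    also have "\<dots> = z ^ 2 * (1 - z + 2 * T * z)"
      unfolding P1 E1 by (simp add: algebra_simps power2_eq_square)
    finally show ?thesis .
  qed
  have A1: "(1 + X * Pf) * ((1 - z) ^ 2 * (1 + z)) = (1 - z + X * z) * (1 - z ^ 2)"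
  proof -
    have "(1 + X * Pf) * ((1 - z) ^ 2 * (1 + z)) = ((1 - z) + X * (Pf * (1 - z))) * ((1 - z) * (1 + z))"
      by (simp add: algebra_simps power2_eq_square)
    also have "\<dots> = (1 - z + X * z) * (1 - z ^ 2)"
      unfolding P1 by (simp add: algebra_simps power2_eq_square)
    finally show ?thesis .
  qed
  have "K * ((1 - z) * (1 - (1 + X ^ 2) * z ^ 2) - 2 * T * X ^ 2 * z ^ 3)
      = K * ((1 - z) ^ 2 * (1 + z)) - X ^ 2 * K * (z ^ 2 * (1 - z + 2 * T * z))"
    by (simp add: algebra_simps power2_eq_square power3_eq_cube)
  also have "K * ((1 - z) ^ 2 * (1 + z)) = (1 + X * Pf) * ((1 - z) ^ 2 * (1 + z)) + X ^ 2 * K * (Qs * ((1 - z) ^ 2 * (1 + z)))"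
    by (subst K1) (simp add: algebra_simps)
  finally have "K * ((1 - z) * (1 - (1 + X ^ 2) * z ^ 2) - 2 * T * X ^ 2 * z ^ 3) = (1 - z + X * z) * (1 - z ^ 2)"
    unfolding Q2 A1 by simp
  then show ?thesis unfolding z_def X_def T_def .
qed

end
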